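(* Let $X_1,\dots,X_k$ be i.i.d. $C_0$-bounded random variables on $[0,L]$, and for $x\in[0,L]$ let $Y(x)=\min_{1\le j\le k}|x-X_j|$. Then $$\min_{0\le x\le L}\mathbf E\big(Y(x)\big)\ge\frac{1}{2C_0(k+1)}.$$
   Context: A real random variable $X$ is $C_0$-bounded (on $[0,L]$) if its cumulative distribution function $F$ equals $0$ on $(-\infty,0)$, $1$ on $(L,\infty)$, and $\varphi$ on $[0,L]$, where $\varphi$ is continuous and weakly differentiable on $[0,L]$ with $\varphi(0)=0$, $\varphi(L)=1$ and $\|\varphi'\|_{L_\infty([0,L])}\le C_0$. *)

theory Defs
  imports "HOL-Probability.Probability"
begin

definition weak_derivative_on :: "real \<Rightarrow> (real \<Rightarrow> real) \<Rightarrow> (real \<Rightarrow> real) \<Rightarrow> bool" where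
  "weak_derivative_on L \<phi> g \<longleftrightarrow>
     set_borel_measurable lborel {0..L} g \<and>
     (\<forall>\<psi> \<psi>'. (\<forall>t. (\<psi> has_real_derivative \<psi>' t) (at t)) \<and> continuous_on UNIV \<psi>' \<and>
              compact (closure {t. \<psi> t \<noteq> 0}) \<and> closure {t. \<psi> t \<noteq> 0} \<subseteq> {0<..<L}
        \<longrightarrow> (LINT t:{0..L}|lborel. \<phi> t * \<psi>' t) = - (LINT t:{0..L}|lborel. g t * \<psi> t))"

definition cdf_of :: "'a measure \<Rightarrow> ('a \<Rightarrow> real) \<Rightarrow> real \<Rightarrow> real" where
  "cdf_of M X t = measure M {\<omega> \<in> space M. X \<omega> \<le> t}"

definition C0_bounded :: "'a measure \<Rightarrow> real \<Rightarrow> real \<Rightarrow> ('a \<Rightarrow> real) \<Rightarrow> bool" where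
  "C0_bounded M C0 L X \<longleftrightarrow>
     (\<forall>t<0. cdf_of M X t = 0) \<and> (\<forall>t>L. cdf_of M X t = 1) \<and>
     (\<exists>\<phi> g. (\<forall>t\<in>{0..L}. cdf_of M X t = \<phi> t) \<and> continuous_on {0..L} \<phi> \<and>
            \<phi> 0 = 0 \<and> \<phi> L = 1 \<and> weak_derivative_on L \<phi> g \<and>
            (AE t in lborel. t \<in> {0..L} \<longrightarrow> \<bar>g t\<bar> \<le> C0))"

end

theory Submission
  imports Defs
begin


definition pp :: "real \<Rightarrow> real" where "pp s = (max 0 s)^2"

lemma pp_deriv: "(pp has_real_derivative 2 * max 0 s) (at s)"
proof (cases "s = 0")
  case True
  have "((\<lambda>y. (pp y - pp 0) / (y - 0)) \<longlongrightarrow> 0) (at 0)"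
  proof (rule Lim_transform_eventually)
    show "((\<lambda>y. max 0 y) \<longlongrightarrow> 0) (at (0::real))"
      using tendsto_max[OF tendsto_const[of 0] tendsto_ident_at[of 0 UNIV]] by simp
    have "\<forall>\<^sub>F y in at (0::real). y \<noteq> 0" by (simp add: eventually_at_filter)
    then show "\<forall>\<^sub>F y in at 0. max 0 y = (pp y - pp 0) / (y - 0)"
      by (rule eventually_mono) (simp add: pp_def power2_eq_square max_def)
  qed
  then show ?thesis using True by (simp add: has_field_derivative_iff)
next
  case False
  show ?thesis
  proof (cases "s > 0")
    case True
    have "((\<lambda>y. y^2) has_real_derivative 2 * s) (at s)"
      by (auto intro!: derivative_eq_intros)
    moreover have ev: "\<forall>\<^sub>F y in nhds s. y^2 = pp y"
      using eventually_nhds_in_open[of "{0<..}" s] True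
      by (auto simp: pp_def elim!: eventually_mono)
    ultimately show ?thesis using True DERIV_cong_ev[OF refl ev refl] by simp
  next
    case False
    have "((\<lambda>y. 0) has_real_derivative 0) (at s)" by simp
    moreover have ev: "\<forall>\<^sub>F y in nhds s. 0 = pp y"
      using eventually_nhds_in_open[of "{..<0}" s] False \<open>s\<noteq>0\<close>
      by (auto simp: pp_def elim!: eventually_mono)
    ultimately show ?thesis using False \<open>s\<noteq>0\<close> DERIV_cong_ev[OF refl ev refl] by simp
  qed
qed

definition RR :: "real \<Rightarrow> real" where "RR s = 2 * (pp s - 2 * pp (s - 1/2) + pp (s - 1))"
definition rr :: "real \<Rightarrow> real" where "rr s = 4 * (max 0 s - 2 * max 0 (s - 1/2) + max 0 (s - 1))"

lemma pp_shift_deriv: "((\<lambda>s. pp (s - c)) has_real_derivative 2 * max 0 (s - c)) (at s)"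
proof -
  have "((\<lambda>s. s - c) has_real_derivative 1) (at s)"
    by (auto intro!: derivative_eq_intros)
  from DERIV_chain2[OF pp_deriv this] show ?thesis by simp
qed

lemma RR_deriv: "(RR has_real_derivative rr s) (at s)"
proof -
  have a: "(pp has_real_derivative 2 * max 0 s) (at s)" by (rule pp_deriv)
  have b: "((\<lambda>s. pp (s - 1/2)) has_real_derivative 2 * max 0 (s - 1/2)) (at s)" by (rule pp_shift_deriv)
  have c: "((\<lambda>s. pp (s - 1)) has_real_derivative 2 * max 0 (s - 1)) (at s)" by (rule pp_shift_deriv)
  have "((\<lambda>s. 2 * (pp s - 2 * pp (s - 1/2) + pp (s - 1))) has_real_derivative
      2 * (2 * max 0 s - 2 * (2 * max 0 (s - 1/2)) + 2 * max 0 (s - 1))) (at s)"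
    by (intro DERIV_cmult DERIV_add DERIV_diff a b c)
  then show ?thesis unfolding RR_def[abs_def] rr_def by (simp add: algebra_simps)
qed

lemma rr_cont: "continuous_on UNIV rr"
  unfolding rr_def by (intro continuous_intros)

lemma rr_nonneg: "rr s \<ge> 0"
  unfolding rr_def by (simp add: max_def)

lemma rr_zero: "s \<le> 0 \<or> s \<ge> 1 \<Longrightarrow> rr s = 0"
  unfolding rr_def by (auto simp: max_def)

lemma RR_0: "s \<le> 0 \<Longrightarrow> RR s = 0"
  unfolding RR_def pp_def by (auto simp: max_def)

lemma RR_1: "s \<ge> 1 \<Longrightarrow> RR s = 1"
  unfolding RR_def pp_def by (auto simp: max_def power2_eq_square algebra_simps)

lemma RR_bounds: "0 \<le> RR s \<and> RR s \<le> 1"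
proof -
  consider "s \<le> 0" | "0 \<le> s" "s \<le> 1/2" | "1/2 \<le> s" "s \<le> 1" | "s \<ge> 1" by linarith
  then show ?thesis
  proof cases
    case 2
    then have "RR s = 2 * s^2" unfolding RR_def pp_def by (auto simp: max_def)
    moreover have "s^2 \<le> (1/2)^2" using 2 by (intro power_mono) auto
    ultimately show ?thesis using zero_le_power2[of s] by (simp add: power2_eq_square)
  next
    case 3
    then have "RR s = 1 - 2 * (1 - s)^2" unfolding RR_def pp_def by (auto simp: max_def power2_eq_square algebra_simps)
    moreover have "(1-s)^2 \<le> (1/2)^2" using 3 by (intro power_mono) auto
    ultimately show ?thesis using zero_le_power2[of "1-s"] by (simp add: power2_eq_square)
  qed (auto simp: RR_0 RR_1)
qed


lemma rr_comp_cont[continuous_intros]: "continuous_on S f \<Longrightarrow> continuous_on S (\<lambda>x. rr (f x))"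
  using continuous_on_compose2[OF rr_cont] by blast

lemma bump_integral:
  fixes c h L :: real
  assumes h: "h > 0" and c: "0 \<le> c" "c + h \<le> L"
  shows "(LINT t:{0..L}|lborel. rr ((t - c)/h) / h) = 1"
proof -
  have d: "((\<lambda>t. RR ((t - c)/h)) has_vector_derivative rr ((t - c)/h) / h) (at t within {0..L})" for t
  proof -
    have "((\<lambda>t. (t - c)/h) has_real_derivative 1/h) (at t)"
      using h by (auto intro!: derivative_eq_intros)
    from DERIV_chain2[OF RR_deriv this]
    have "((\<lambda>t. RR ((t - c)/h)) has_real_derivative rr ((t - c)/h) / h) (at t)" by simp
    then show ?thesis
      by (auto simp: has_real_derivative_iff_has_vector_derivative intro: has_vector_derivative_at_within)
  qed
  have "(LINT t:{0..L}|lborel. rr ((t - c)/h) / h) = RR ((L - c)/h) - RR ((0 - c)/h)"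
    unfolding set_lebesgue_integral_def
    by (rule integral_FTC_atLeastAtMost) (use c h d in \<open>auto intro!: continuous_intros\<close>)
  moreover have "RR ((L - c)/h) = 1" using h c by (intro RR_1) (simp add: field_simps)
  moreover have "RR ((0 - c)/h) = 0" using h c by (intro RR_0) (simp add: field_simps)
  ultimately show ?thesis by simp
qed

lemma bump_bound:
  fixes c h L e v :: real and \<phi> :: "real \<Rightarrow> real"
  assumes h: "h > 0" and c: "0 \<le> c" "c + h \<le> L"
    and cont: "continuous_on {0..L} \<phi>"
    and near: "\<And>t. c < t \<Longrightarrow> t < c + h \<Longrightarrow> \<bar>\<phi> t - v\<bar> \<le> e"
  shows "\<bar>(LINT t:{0..L}|lborel. \<phi> t * (rr ((t - c)/h) / h)) - v\<bar> \<le> e"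
proof -
  let ?w = "\<lambda>t. rr ((t - c)/h) / h"
  have wnn: "?w t \<ge> 0" for t using rr_nonneg h by simp
  have w0: "?w t = 0" if "\<not> (c < t \<and> t < c + h)" for t
  proof -
    have "(t - c)/h \<le> 0 \<or> (t - c)/h \<ge> 1" using that h by (auto simp: field_simps)
    then show ?thesis using rr_zero by simp
  qed
  have cw: "continuous_on {0..L} ?w" by (intro continuous_intros) (use h in auto)
  have iw: "set_integrable lborel {0..L} ?w" by (rule borel_integrable_atLeastAtMost'[OF cw])
  have ipw: "set_integrable lborel {0..L} (\<lambda>t. \<phi> t * ?w t)"
    by (rule borel_integrable_atLeastAtMost') (intro continuous_intros cont cw)
  have I1: "(LINT t:{0..L}|lborel. ?w t) = 1" by (rule bump_integral[OF h c])
  have up: "\<phi> t * ?w t \<le> (v + e) * ?w t" for t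
  proof (cases "c < t \<and> t < c + h")
    case True then show ?thesis using near[of t] wnn[of t] by (intro mult_right_mono) auto
  qed (simp add: w0)
  have lo: "(v - e) * ?w t \<le> \<phi> t * ?w t" for t
  proof (cases "c < t \<and> t < c + h")
    case True then show ?thesis using near[of t] wnn[of t] by (intro mult_right_mono) auto
  qed (simp add: w0)
  have "(LINT t:{0..L}|lborel. \<phi> t * ?w t) \<le> (LINT t:{0..L}|lborel. (v + e) * ?w t)"
    by (rule set_integral_mono[OF ipw]) (use iw up in auto)
  also have "\<dots> = v + e" using I1 by simp
  finally have A: "(LINT t:{0..L}|lborel. \<phi> t * ?w t) \<le> v + e" .
  have "(LINT t:{0..L}|lborel. (v - e) * ?w t) \<le> (LINT t:{0..L}|lborel. \<phi> t * ?w t)"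
    by (rule set_integral_mono[OF _ ipw]) (use iw lo in auto)
  moreover have "(LINT t:{0..L}|lborel. (v - e) * ?w t) = v - e" using I1 by simp
  ultimately show ?thesis using A by linarith
qed


lemma g_bound:
  fixes g \<psi> :: "real \<Rightarrow> real"
  assumes ae: "AE t in lborel. t \<in> {0..L} \<longrightarrow> \<bar>g t\<bar> \<le> C0" and C0: "C0 \<ge> 0"
    and psi: "\<And>t. \<bar>\<psi> t\<bar> \<le> indicator {p..q} t" and pq: "p \<le> q"
  shows "\<bar>LINT t:{0..L}|lborel. g t * \<psi> t\<bar> \<le> C0 * (q - p)"
proof -
  have int: "integrable lborel (\<lambda>t. indicator {p..q} t *\<^sub>R C0)"
    using borel_integrable_atLeastAtMost'[of p q "\<lambda>_. C0"] unfolding set_integrable_def by simp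
  have "\<bar>LINT t:{0..L}|lborel. g t * \<psi> t\<bar> \<le> (\<integral>t. \<bar>indicator {0..L} t *\<^sub>R (g t * \<psi> t)\<bar> \<partial>lborel)"
    unfolding set_lebesgue_integral_def by (rule integral_abs_bound)
  also have "\<dots> \<le> (\<integral>t. indicator {p..q} t *\<^sub>R C0 \<partial>lborel)"
  proof (rule integral_mono_AE'[OF int])
    show "AE t in lborel. \<bar>indicator {0..L} t *\<^sub>R (g t * \<psi> t)\<bar> \<le> indicator {p..q} t *\<^sub>R C0"
      using ae
    proof (rule AE_mp, intro AE_I2 impI)
      fix t assume h: "t \<in> {0..L} \<longrightarrow> \<bar>g t\<bar> \<le> C0"
      show "\<bar>indicator {0..L} t *\<^sub>R (g t * \<psi> t)\<bar> \<le> indicator {p..q} t *\<^sub>R C0"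
      proof (cases "t \<in> {0..L}")
        case True
        then have "\<bar>g t * \<psi> t\<bar> \<le> C0 * indicator {p..q} t"
          unfolding abs_mult using h psi[of t] by (intro mult_mono) auto
        then show ?thesis using True by (simp add: mult.commute)
      qed (use C0 in \<open>auto simp: indicator_def\<close>)
    qed
    show "AE t in lborel. 0 \<le> indicator {p..q} t *\<^sub>R C0" using C0 by auto
  qed
  also have "\<dots> = C0 * q - C0 * p"
    by (rule integral_FTC_atLeastAtMost[OF pq]) (auto intro!: derivative_eq_intros)
  finally show ?thesis by (simp add: algebra_simps)
qed


lemma aux_half: "(x::real) \<le> c + (x - c) / 2 \<Longrightarrow> 0 < x - c \<Longrightarrow> False"
  by (simp add: field_simps)

lemma aux_comb: "\<bar>Ia - pa\<bar> \<le> (e::real) \<Longrightarrow> \<bar>Ib - pb\<bar> \<le> e \<Longrightarrow> Ia - Ib = - G \<Longrightarrow> \<bar>G\<bar> \<le> K1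
   \<Longrightarrow> K1 \<le> K \<Longrightarrow> \<bar>pb - pa\<bar> \<le> K + 2*e"
  by (simp add: abs_le_iff)

lemma lip_interior:
  fixes \<phi> g :: "real \<Rightarrow> real"
  assumes wd: "weak_derivative_on L \<phi> g" and cont: "continuous_on {0..L} \<phi>"
    and ae: "AE t in lborel. t \<in> {0..L} \<longrightarrow> \<bar>g t\<bar> \<le> C0" and C0: "C0 \<ge> 0"
    and ab: "0 < a" "a < b" "b < L"
  shows "\<bar>\<phi> b - \<phi> a\<bar> \<le> C0 * (b - a)"
proof -
  have key: "\<bar>\<phi> b - \<phi> a\<bar> \<le> C0 * (b - a) + (2*C0 + 2) * e" if e: "e > 0" for e
  proof -
    have aL: "a \<in> {0..L}" "b \<in> {0..L}" using ab by auto
    obtain da where da: "da > 0" "\<forall>t\<in>{0..L}. dist t a < da \<longrightarrow> dist (\<phi> t) (\<phi> a) < e"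
      using cont aL(1) e unfolding continuous_on_iff by blast
    obtain db where db: "db > 0" "\<forall>t\<in>{0..L}. dist t b < db \<longrightarrow> dist (\<phi> t) (\<phi> b) < e"
      using cont aL(2) e unfolding continuous_on_iff by blast
    define h where "h = min (min (da/2) (db/2)) (min (min (a/2) ((L-b)/2)) e)"
    have h1: "h \<le> da/2" "h \<le> db/2" "h \<le> a/2" "h \<le> (L-b)/2" "h \<le> e"
      unfolding h_def by linarith+
    have "h > 0" using da db ab e unfolding h_def by auto
    then have h: "h > 0" "h < da" "h < db" "h < a" "b + h < L" "h \<le> e"
      using h1 da db ab by auto
    define \<psi> where "\<psi> t = RR ((t - (a - h))/h) - RR ((t - b)/h)" for t
    define wa where "wa t = rr ((t - (a - h))/h) / h" for t
    define wb where "wb t = rr ((t - b)/h) / h" for t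
    have dpsi: "(\<psi> has_real_derivative wa t - wb t) (at t)" for t
    proof -
      have d1: "((\<lambda>t. (t - (a - h))/h) has_real_derivative 1/h) (at t)"
        using h by (auto intro!: derivative_eq_intros)
      have d2: "((\<lambda>t. (t - b)/h) has_real_derivative 1/h) (at t)"
        using h by (auto intro!: derivative_eq_intros)
      show ?thesis unfolding \<psi>_def[abs_def] wa_def wb_def
        using DERIV_diff[OF DERIV_chain2[OF RR_deriv d1] DERIV_chain2[OF RR_deriv d2]] by simp
    qed
    have cpsi': "continuous_on UNIV (\<lambda>t. wa t - wb t)"
      unfolding wa_def wb_def by (intro continuous_intros) (use h in auto)
    have psi_ind: "\<bar>\<psi> t\<bar> \<le> indicator {a-h..b+h} t" for t
    proof (cases "t \<in> {a-h..b+h}")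
      case True
      then show ?thesis unfolding \<psi>_def
        using RR_bounds[of "(t - (a - h))/h"] RR_bounds[of "(t - b)/h"] by auto
    next
      case False
      then have "t < a - h \<or> t > b + h" by auto
      then have "\<psi> t = 0"
      proof
        assume "t < a - h"
        then have "(t - (a - h))/h \<le> 0" "(t - b)/h \<le> 0" using h ab by (auto simp: field_simps)
        then show ?thesis unfolding \<psi>_def by (simp add: RR_0)
      next
        assume "t > b + h"
        then have "(t - (a - h))/h \<ge> 1" "(t - b)/h \<ge> 1" using h ab by (auto simp: field_simps)
        then show ?thesis unfolding \<psi>_def by (simp add: RR_1)
      qed
      then show ?thesis by simp
    qed
    have supp: "{t. \<psi> t \<noteq> 0} \<subseteq> {a-h..b+h}"
          proof
      fix t assume t: "t \<in> {t. \<psi> t \<noteq> 0}"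
      show "t \<in> {a-h..b+h}"
      proof (rule ccontr)
        assume "t \<notin> {a-h..b+h}"
        then have "\<bar>\<psi> t\<bar> \<le> 0" using psi_ind[of t] by simp
        then show False using t by simp
      qed
    qed
    have cl: "closure {t. \<psi> t \<noteq> 0} \<subseteq> {a-h..b+h}"
      by (rule closure_minimal[OF supp]) simp
    have comp: "compact (closure {t. \<psi> t \<noteq> 0})"
      unfolding compact_closure by (rule bounded_subset[OF bounded_closed_interval supp])
    have sub: "closure {t. \<psi> t \<noteq> 0} \<subseteq> {0<..<L}"
      using cl h ab by auto
    have weq: "(LINT t:{0..L}|lborel. \<phi> t * (wa t - wb t)) = - (LINT t:{0..L}|lborel. g t * \<psi> t)"
          proof -
      have W: "\<forall>\<psi> \<psi>'. (\<forall>t. (\<psi> has_real_derivative \<psi>' t) (at t)) \<and> continuous_on UNIV \<psi>' \<and>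
              compact (closure {t. \<psi> t \<noteq> 0}) \<and> closure {t. \<psi> t \<noteq> 0} \<subseteq> {0<..<L}
        \<longrightarrow> (LINT t:{0..L}|lborel. \<phi> t * \<psi>' t) = - (LINT t:{0..L}|lborel. g t * \<psi> t)"
        using wd unfolding weak_derivative_on_def by blast
      show ?thesis using W[rule_format, of \<psi> "\<lambda>t. wa t - wb t"] dpsi cpsi' comp sub by blast
    qed
    have cwa: "continuous_on {0..L} wa" "continuous_on {0..L} wb"
      unfolding wa_def wb_def by (intro continuous_intros; use h in auto)+
    have ia: "set_integrable lborel {0..L} (\<lambda>t. \<phi> t * wa t)"
      by (rule borel_integrable_atLeastAtMost') (intro continuous_intros cont cwa)
    have ib: "set_integrable lborel {0..L} (\<lambda>t. \<phi> t * wb t)"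
      by (rule borel_integrable_atLeastAtMost') (intro continuous_intros cont cwa)
    have D: "(LINT t:{0..L}|lborel. \<phi> t * (wa t - wb t)) =
        (LINT t:{0..L}|lborel. \<phi> t * wa t) - (LINT t:{0..L}|lborel. \<phi> t * wb t)"
      using set_integral_diff(2)[OF ia ib] by (simp add: algebra_simps)
    have A: "\<bar>(LINT t:{0..L}|lborel. \<phi> t * wa t) - \<phi> a\<bar> \<le> e"
      unfolding wa_def
    proof (rule bump_bound)
      show "0 < h" "0 \<le> a - h" "a - h + h \<le> L" using h ab by auto
      fix t assume "a - h < t" "t < a - h + h"
      then have "t \<in> {0..L}" "dist t a < da" using h ab by (auto simp: dist_real_def)
      then show "\<bar>\<phi> t - \<phi> a\<bar> \<le> e" using da by (auto simp: dist_real_def)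
    qed (rule cont)
    have B: "\<bar>(LINT t:{0..L}|lborel. \<phi> t * wb t) - \<phi> b\<bar> \<le> e"
      unfolding wb_def
    proof (rule bump_bound)
      show "0 < h" "0 \<le> b" "b + h \<le> L" using h ab by auto
      fix t assume "b < t" "t < b + h"
      then have "t \<in> {0..L}" "dist t b < db" using h ab by (auto simp: dist_real_def)
      then show "\<bar>\<phi> t - \<phi> b\<bar> \<le> e" using db by (auto simp: dist_real_def)
    qed (rule cont)
    have G: "\<bar>LINT t:{0..L}|lborel. g t * \<psi> t\<bar> \<le> C0 * ((b+h) - (a-h))"
      by (rule g_bound[OF ae C0 psi_ind]) (use h ab in auto)
    have K: "C0 * ((b+h) - (a-h)) \<le> C0 * (b - a) + 2 * C0 * e"
      using mult_left_mono[OF h(6) C0] by (simp add: algebra_simps)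
    have "\<bar>\<phi> b - \<phi> a\<bar> \<le> (C0 * (b - a) + 2 * C0 * e) + 2 * e"
      by (rule aux_comb[OF A B _ G K]) (use D weq in simp)
    then show ?thesis by (simp add: algebra_simps)
  qed
  show ?thesis
  proof (rule ccontr)
    assume "\<not> ?thesis"
    then have pos: "\<bar>\<phi> b - \<phi> a\<bar> - C0 * (b - a) > 0" by simp
    define e where "e = (\<bar>\<phi> b - \<phi> a\<bar> - C0 * (b - a)) / (2 * (2*C0 + 2))"
    have e: "e > 0" using pos C0 unfolding e_def by simp
    have eq: "(2*C0 + 2) * e = (\<bar>\<phi> b - \<phi> a\<bar> - C0 * (b - a)) / 2"
      unfolding e_def using C0 by (simp add: field_simps)
    have "\<bar>\<phi> b - \<phi> a\<bar> \<le> C0 * (b - a) + (\<bar>\<phi> b - \<phi> a\<bar> - C0 * (b - a)) / 2"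
      using key[OF e] unfolding eq .
    then show False using pos aux_half by blast
  qed
qed


lemma lip_closed:
  fixes \<phi> g :: "real \<Rightarrow> real"
  assumes wd: "weak_derivative_on L \<phi> g" and cont: "continuous_on {0..L} \<phi>"
    and ae: "AE t in lborel. t \<in> {0..L} \<longrightarrow> \<bar>g t\<bar> \<le> C0" and C0: "C0 \<ge> 0"
    and ab: "0 \<le> a" "a \<le> b" "b \<le> L"
  shows "\<bar>\<phi> b - \<phi> a\<bar> \<le> C0 * (b - a)"
proof (cases "a = b")
  case True then show ?thesis by simp
next
  case False
  then have ab': "a < b" using ab by simp
  have key: "\<bar>\<phi> b - \<phi> a\<bar> \<le> C0 * (b - a) + 2 * e" if e: "e > 0" for e
  proof -
    have aL: "a \<in> {0..L}" "b \<in> {0..L}" using ab by auto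
    obtain da where da: "da > 0" "\<forall>t\<in>{0..L}. dist t a < da \<longrightarrow> dist (\<phi> t) (\<phi> a) < e"
      using cont aL(1) e unfolding continuous_on_iff by blast
    obtain db where db: "db > 0" "\<forall>t\<in>{0..L}. dist t b < db \<longrightarrow> dist (\<phi> t) (\<phi> b) < e"
      using cont aL(2) e unfolding continuous_on_iff by blast
    define d where "d = min (min (da/2) (db/2)) ((b - a)/3)"
    have d1: "d \<le> da/2" "d \<le> db/2" "d \<le> (b-a)/3" unfolding d_def by linarith+
    have "d > 0" using da db ab' unfolding d_def by auto
    then have d: "d > 0" "d < da" "d < db" "d < (b - a)/2" using d1 da db ab' by auto
    have I: "\<bar>\<phi> (b - d) - \<phi> (a + d)\<bar> \<le> C0 * ((b - d) - (a + d))"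
      by (rule lip_interior[OF wd cont ae C0]) (use d ab in auto)
    have "C0 * ((b - d) - (a + d)) \<le> C0 * (b - a)" using d C0 by (intro mult_left_mono) auto
    moreover have "\<bar>\<phi> (a + d) - \<phi> a\<bar> < e"
      using da(2)[rule_format, of "a + d"] d ab by (auto simp: dist_real_def)
    moreover have "\<bar>\<phi> (b - d) - \<phi> b\<bar> < e"
      using db(2)[rule_format, of "b - d"] d ab by (auto simp: dist_real_def)
    ultimately show ?thesis using I by (simp add: abs_le_iff abs_less_iff)
  qed
  show ?thesis
  proof (rule ccontr)
    assume "\<not> ?thesis"
    then have pos: "\<bar>\<phi> b - \<phi> a\<bar> - C0 * (b - a) > 0" by simp
    define e where "e = (\<bar>\<phi> b - \<phi> a\<bar> - C0 * (b - a)) / 4"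
    have e: "e > 0" using pos unfolding e_def by simp
    have eq: "2 * e = (\<bar>\<phi> b - \<phi> a\<bar> - C0 * (b - a)) / 2" unfolding e_def by simp
    have "\<bar>\<phi> b - \<phi> a\<bar> \<le> C0 * (b - a) + (\<bar>\<phi> b - \<phi> a\<bar> - C0 * (b - a)) / 2"
      using key[OF e] unfolding eq .
    then show False using pos aux_half by blast
  qed
qed

lemma C0_bounded_lip:
  assumes cb: "C0_bounded M C0 L X" and C0: "C0 \<ge> 0"
  shows "L > 0" "\<And>u v. v \<le> u \<Longrightarrow> cdf_of M X u - cdf_of M X v \<le> C0 * (u - v)"
    "cdf_of M X 0 = 0" "cdf_of M X L = 1"
proof -
  obtain \<phi> g where phi: "\<forall>t\<in>{0..L}. cdf_of M X t = \<phi> t" "continuous_on {0..L} \<phi>"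
    "\<phi> 0 = 0" "\<phi> L = 1" "weak_derivative_on L \<phi> g"
    "AE t in lborel. t \<in> {0..L} \<longrightarrow> \<bar>g t\<bar> \<le> C0"
    and lo: "\<forall>t<0. cdf_of M X t = 0" and hi: "\<forall>t>L. cdf_of M X t = 1"
    using cb unfolding C0_bounded_def by blast
  show Lpos: "L > 0"
  proof (rule ccontr)
    assume "\<not> L > 0"
    then have "L < 0 \<or> L = 0" by linarith
    then show False
    proof
      assume L: "L < 0"
      have "L/2 < 0" "L/2 > L" using L by auto
      then have "cdf_of M X (L/2) = 0" "cdf_of M X (L/2) = 1" using lo hi by blast+
      then show False by simp
    qed (use phi in simp)
  qed
  define cl where "cl u = max 0 (min L u)" for u
  have clF: "cdf_of M X u = \<phi> (cl u)" for u
  proof -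
    consider "u < 0" | "u > L" | "u \<in> {0..L}" by force
    then show ?thesis
    proof cases
      case 1 then show ?thesis using lo phi Lpos by (simp add: cl_def)
    next
      case 2 then show ?thesis using hi phi Lpos by (simp add: cl_def)
    next
      case 3 then show ?thesis using phi by (simp add: cl_def)
    qed
  qed
  show "cdf_of M X 0 = 0" "cdf_of M X L = 1" using phi Lpos by auto
  fix u v :: real assume vu: "v \<le> u"
  have "cl v \<le> cl u" "0 \<le> cl v" "cl u \<le> L" "cl u - cl v \<le> u - v" using vu Lpos by (auto simp: cl_def)
  then have "\<bar>\<phi> (cl u) - \<phi> (cl v)\<bar> \<le> C0 * (cl u - cl v)"
    by (intro lip_closed[OF phi(5,2,6) C0]) auto
  also have "\<dots> \<le> C0 * (u - v)" using \<open>cl u - cl v \<le> u - v\<close> C0 by (intro mult_left_mono)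
  finally show "cdf_of M X u - cdf_of M X v \<le> C0 * (u - v)" unfolding clF by simp
qed



lemma pow_step: "(real n + 1)^(k+1) - real (k+1) * (real n + 1)^k \<le> real n ^ (k+1)"
proof -
  define m where "m = real n + 1"
  have m: "m \<ge> 1" unfolding m_def by simp
  have "1 + real (k+1) * (-1/m) \<le> (1 + -1/m)^(k+1)"
    by (rule Bernoulli_inequality) (use m in \<open>simp add: field_simps\<close>)
  also have "1 + -1/m = real n / m" using m unfolding m_def by (simp add: field_simps)
  finally have "1 - real (k+1) / m \<le> (real n)^(k+1) / m^(k+1)" by (simp add: power_divide)
  then have "m^(k+1) * (1 - real (k+1) / m) \<le> m^(k+1) * ((real n)^(k+1) / m^(k+1))"
    using m by (intro mult_left_mono) auto
  moreover have "m^(k+1) * (1 - real (k+1) / m) = m^(k+1) - real (k+1) * m^k"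
    using m by (simp add: field_simps)
  moreover have "m^(k+1) * ((real n)^(k+1) / m^(k+1)) = real n ^ (k+1)"
    using m by simp
  ultimately have "m^(k+1) - real (k+1) * m^k \<le> real n ^ (k+1)" by metis
  then show ?thesis unfolding m_def .
qed

lemma sum_pow_lb: "real n^(k+1) / real (k+1) \<le> (\<Sum>j<n+1. real j ^ k)"
proof (induction n)
  case 0 then show ?case by simp
next
  case (Suc n)
  have "real (Suc n)^(k+1) \<le> real n^(k+1) + real (k+1) * (real n + 1)^k"
    using pow_step[of n k] by (simp add: add.commute)
  then have "real (Suc n)^(k+1) / real (k+1) \<le> (real n^(k+1) + real (k+1) * (real n + 1)^k) / real (k+1)"
    by (rule divide_right_mono) simp
  also have "\<dots> = real n^(k+1) / real (k+1) + (real n + 1)^k"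
    by (simp add: add_divide_distrib del: of_nat_Suc)
  also have "\<dots> \<le> (\<Sum>j<n+1. real j ^ k) + real (n+1)^k"
  proof -
    have e: "(real n + 1)^k = real (n+1)^k" by (simp add: add.commute)
    show ?thesis unfolding e by (rule add_right_mono[OF Suc.IH])
  qed
  also have "\<dots> = (\<Sum>j<Suc n+1. real j ^ k)" by simp
  finally show ?case .
qed

lemma discrete_lb:
  fixes y c :: real and N :: nat
  assumes y: "y \<ge> 0" and c: "c > 0" and N: "N > 0"
  shows "(\<Sum>i<N. c / N * (if y > real (i+1) * c / N then 1 else 0)) \<le> y"
proof -
  define f where "f i = min y (real i * c / N)" for i :: nat
  have tm: "c / N * (if y > real (i+1) * c / N then 1 else 0) \<le> f (Suc i) - f i" for i
  proof (cases "y > real (i+1) * c / N")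
    case True
    moreover have "real i * c / N \<le> real (i+1) * c / N" using c N by (intro divide_right_mono mult_right_mono) auto
    ultimately have "f (Suc i) = real (i+1) * c / N" "f i = real i * c / N" unfolding f_def by auto
    then show ?thesis using True N by (simp add: field_simps)
  next
    case False
    have "real i * c / N \<le> real (Suc i) * c / N" using c N by (intro divide_right_mono mult_right_mono) auto
    then have "f i \<le> f (Suc i)" unfolding f_def by auto
    then show ?thesis using False by simp
  qed
  have "(\<Sum>i<N. c / N * (if y > real (i+1) * c / N then 1 else 0)) \<le> (\<Sum>i<N. f (Suc i) - f i)"
    by (intro sum_mono tm)
  also have "\<dots> = f N - f 0" by (rule sum_lessThan_telescope)
  also have "\<dots> \<le> y" unfolding f_def using y by simp
  finally show ?thesis .
qed





lemma prob_near:
  assumes P: "prob_space M" and Xm: "X \<in> borel_measurable M" and C0: "C0 > 0"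
    and lip: "\<And>u v. v \<le> u \<Longrightarrow> cdf_of M X u - cdf_of M X v \<le> C0 * (u - v)" and t: "t \<ge> 0"
  shows "measure M {\<omega>\<in>space M. \<bar>x - X \<omega>\<bar> \<le> t} \<le> 2 * C0 * t"
proof -
  interpret prob_space M by (rule P)
  note [measurable] = Xm
  define A where "A = {\<omega>\<in>space M. \<bar>x - X \<omega>\<bar> \<le> t}"
  have Am: "A \<in> sets M" unfolding A_def by measurable
  have key: "measure M A \<le> 2 * C0 * t + C0 * d" if d: "d > 0" for d
  proof -
    define B where "B = {\<omega>\<in>space M. X \<omega> \<le> x - t - d}"
    define C where "C = {\<omega>\<in>space M. X \<omega> \<le> x + t}"
    have Bm: "B \<in> sets M" unfolding B_def by measurable
    have Cm: "C \<in> sets M" unfolding C_def by measurable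
    have dis: "A \<inter> B = {}" unfolding A_def B_def using d by auto
    have sub: "A \<union> B \<subseteq> C" unfolding A_def B_def C_def using d t by auto
    have "measure M A + measure M B = measure M (A \<union> B)"
      using finite_measure_Union[OF Am Bm dis] by simp
    also have "\<dots> \<le> measure M C" by (rule finite_measure_mono[OF sub Cm])
    finally have "measure M A \<le> cdf_of M X (x + t) - cdf_of M X (x - t - d)"
      unfolding cdf_of_def B_def C_def by simp
    also have "\<dots> \<le> C0 * ((x + t) - (x - t - d))" by (rule lip) (use d t in simp)
    finally show ?thesis by (simp add: algebra_simps)
  qed
  show ?thesis
  proof (rule ccontr)
    assume "\<not> ?thesis"
    then have pos: "measure M A - 2 * C0 * t > 0" unfolding A_def by simp
    define d where "d = (measure M A - 2 * C0 * t) / (2 * C0)"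
    have d: "d > 0" using pos C0 unfolding d_def by simp
    have eq: "C0 * d = (measure M A - 2 * C0 * t) / 2" unfolding d_def using C0 by simp
    have "measure M A \<le> 2 * C0 * t + (measure M A - 2 * C0 * t) / 2"
      using key[OF d] unfolding eq .
    then show False using pos aux_half by blast
  qed
qed


theorem mainTheorem11:
  fixes M :: "'a measure" and X :: "nat \<Rightarrow> 'a \<Rightarrow> real" and k :: nat and C0 L :: real
  assumes "prob_space M"
    and "k \<ge> 1"
    and "\<And>j. j \<in> {1..k} \<Longrightarrow> X j \<in> borel_measurable M"
    and "prob_space.indep_vars M (\<lambda>_. borel) X {1..k}"
    and "\<And>j. j \<in> {1..k} \<Longrightarrow> distr M borel (X j) = distr M borel (X 1)"
    and "\<And>j. j \<in> {1..k} \<Longrightarrow> C0_bounded M C0 L (X j)"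
  shows "\<forall>x\<in>{0..L}. (\<integral>\<omega>. Min ((\<lambda>j. \<bar>x - X j \<omega>\<bar>) ` {1..k}) \<partial>M) \<ge> 1 / (2 * C0 * (real k + 1))"
proof
  interpret prob_space M by (rule assms(1))
  fix x assume x: "x \<in> {0..L}"
  define Y where "Y \<omega> = Min ((\<lambda>j. \<bar>x - X j \<omega>\<bar>) ` {1..k})" for \<omega>
  have fin: "finite {1..k}" "{1..k} \<noteq> {}" using assms(2) by auto
  have Ynn: "Y \<omega> \<ge> 0" for \<omega> unfolding Y_def using fin by simp
  have "(\<integral>\<omega>. Y \<omega> \<partial>M) \<ge> 1 / (2 * C0 * (real k + 1))"
  proof (cases "C0 \<le> 0")
    case True
    then have "1 / (2 * C0 * (real k + 1)) \<le> 0" by (simp add: divide_le_0_iff mult_nonpos_nonneg)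
    also have "0 \<le> (\<integral>\<omega>. Y \<omega> \<partial>M)" using Ynn by simp
    finally show ?thesis .
  next
    case False
    then have C0: "C0 > 0" by simp
    note lipj = C0_bounded_lip[OF assms(6) less_imp_le[OF C0]]
    have one: "1 \<in> {1..k}" using assms(2) by simp
    have Lpos: "L > 0" using lipj(1)[OF one] .
    have Xm: "X j \<in> borel_measurable M" if "j \<in> {1..k}" for j using assms(3) that .
    have Ym: "Y \<in> borel_measurable M"
      unfolding Y_def by (rule borel_measurable_Min[OF fin(1)]) (use Xm in measurable)
    have Ysets: "{\<omega>\<in>space M. t < Y \<omega>} \<in> sets M" for t using Ym by measurable
    have tail: "prob {\<omega>\<in>space M. t < Y \<omega>} \<ge> (1 - 2 * C0 * t)^k"
      if t: "0 \<le> t" "t \<le> 1 / (2 * C0)" for t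
    proof -
      define E where "E j = {\<omega>\<in>space M. t < \<bar>x - X j \<omega>\<bar>}" for j
      have eq: "{\<omega>\<in>space M. t < Y \<omega>} = (\<Inter>j\<in>{1..k}. E j)"
        unfolding Y_def E_def using fin by auto
      have ind: "indep_events E {1..k}"
        unfolding E_def
        by (rule indep_eventsI_indep_vars[OF assms(4)]) simp
      then have "prob (\<Inter>j\<in>{1..k}. E j) = (\<Prod>j\<in>{1..k}. prob (E j))"
        unfolding indep_events_def using fin by auto
      moreover have "prob (E j) \<ge> 1 - 2 * C0 * t" if j: "j \<in> {1..k}" for j
      proof -
        note [measurable] = Xm[OF j]
        have A: "{\<omega>\<in>space M. \<bar>x - X j \<omega>\<bar> \<le> t} \<in> events" by measurable
        have "E j = space M - {\<omega>\<in>space M. \<bar>x - X j \<omega>\<bar> \<le> t}" unfolding E_def by auto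
        then have "prob (E j) = 1 - prob {\<omega>\<in>space M. \<bar>x - X j \<omega>\<bar> \<le> t}"
          using prob_compl[OF A] by simp
        moreover have "prob {\<omega>\<in>space M. \<bar>x - X j \<omega>\<bar> \<le> t} \<le> 2 * C0 * t"
          by (rule prob_near[OF assms(1) Xm[OF j] C0 lipj(2)[OF j] t(1)])
        ultimately show ?thesis by simp
      qed
      moreover have "1 - 2 * C0 * t \<ge> 0" using t C0 by (simp add: field_simps)
      ultimately have "prob (\<Inter>j\<in>{1..k}. E j) \<ge> (\<Prod>j\<in>{1..k}. 1 - 2 * C0 * t)"
        by (simp only:) (rule prod_mono, blast)
      then show ?thesis using eq by simp
    qed
    have Yint: "integrable M Y"
    proof (rule Bochner_Integration.integrable_bound[OF integrable_const[of L] Ym])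
      note [measurable] = Xm[OF one]
      define S where "S = {\<omega>\<in>space M. X 1 \<omega> \<le> L} - {\<omega>\<in>space M. X 1 \<omega> \<le> 0}"
      have "prob S = prob {\<omega>\<in>space M. X 1 \<omega> \<le> L} - prob {\<omega>\<in>space M. X 1 \<omega> \<le> 0}"
      proof -
        have m1: "{\<omega>\<in>space M. X 1 \<omega> \<le> L} \<in> events" by measurable
        have m2: "{\<omega>\<in>space M. X 1 \<omega> \<le> 0} \<in> events" by measurable
        show ?thesis unfolding S_def by (rule finite_measure_Diff[OF m1 m2]) (use Lpos in auto)
      qed
      also have "\<dots> = 1" using lipj(3,4)[OF one] unfolding cdf_of_def by simp
      finally have "AE \<omega> in M. \<omega> \<in> S" by (rule AE_prob_1)
      then show "AE \<omega> in M. norm (Y \<omega>) \<le> norm L"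
      proof (rule AE_mp, intro AE_I2 impI)
        fix \<omega> assume "\<omega> \<in> S"
        then have "0 < X 1 \<omega>" "X 1 \<omega> \<le> L" unfolding S_def by auto
        moreover have "Y \<omega> \<le> \<bar>x - X 1 \<omega>\<bar>" unfolding Y_def using fin one by (intro Min_le) auto
        ultimately show "norm (Y \<omega>) \<le> norm L" using x Ynn[of \<omega>] by auto
      qed
    qed
    define c where "c = 1 / (2 * C0)"
    have c: "c > 0" unfolding c_def using C0 by simp
    have bound: "c / real (k+1) * (real n / real (n+1))^(k+1) \<le> (\<integral>\<omega>. Y \<omega> \<partial>M)" for n
    proof -
      define N where "N = n + 1"
      have N: "N > 0" unfolding N_def by simp
      define Ei where "Ei i = {\<omega>\<in>space M. real (i+1) * c / N < Y \<omega>}" for i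
      have Eim: "Ei i \<in> sets M" for i unfolding Ei_def by (rule Ysets)
      have "(\<integral>\<omega>. (\<Sum>i<N. c / N * indicator (Ei i) \<omega>) \<partial>M) \<le> (\<integral>\<omega>. Y \<omega> \<partial>M)"
      proof (rule integral_mono[OF _ Yint])
        show "integrable M (\<lambda>\<omega>. \<Sum>i<N. c / real N * indicator (Ei i) \<omega>)"
          using Eim by (intro Bochner_Integration.integrable_sum) (auto intro!: Bochner_Integration.integrable_mult_right integrable_real_indicator simp: less_top[symmetric])
        fix \<omega> assume "\<omega> \<in> space M"
        then have "(\<Sum>i<N. c / N * indicator (Ei i) \<omega>) = (\<Sum>i<N. c / N * (if Y \<omega> > real (i+1) * c / N then 1 else 0))"
          unfolding Ei_def by (intro sum.cong) auto
        also have "\<dots> \<le> Y \<omega>" by (rule discrete_lb[OF Ynn c N])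
        finally show "(\<Sum>i<N. c / N * indicator (Ei i) \<omega>) \<le> Y \<omega>" .
      qed
      moreover have "(\<integral>\<omega>. (\<Sum>i<N. c / N * indicator (Ei i) \<omega>) \<partial>M) = (\<Sum>i<N. c / N * prob (Ei i))"
        using Eim by (subst Bochner_Integration.integral_sum) (auto simp: Int_absorb2 sets.sets_into_space less_top[symmetric])
      moreover have "(\<Sum>i<N. c / N * prob (Ei i)) \<ge> (\<Sum>i<N. c / N * (real (N - Suc i) / N)^k)"
      proof (rule sum_mono)
        fix i assume i: "i \<in> {..<N}"
        have iN: "real (i+1) * c \<le> real N * c" using i c by (intro mult_right_mono) auto
        have t: "0 \<le> real (i+1) * c / N" "real (i+1) * c / N \<le> 1 / (2 * C0)"
          using c N apply simp
          using iN N unfolding c_def[symmetric] by (simp add: pos_divide_le_eq mult.commute)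
        have "1 - 2 * C0 * (real (i+1) * c / N) = real (N - Suc i) / N"
          using i C0 N by (simp add: c_def field_simps of_nat_diff)
        then have "prob (Ei i) \<ge> (real (N - Suc i) / N)^k"
          using tail[OF t] unfolding Ei_def by simp
        then show "c / N * (real (N - Suc i) / N)^k \<le> c / N * prob (Ei i)"
          using c N by (intro mult_left_mono) auto
      qed
      moreover have "(\<Sum>i<N. c / N * (real (N - Suc i) / N)^k) = c / N^(k+1) * (\<Sum>j<N. real j ^ k)"
      proof -
        have "(\<Sum>i<N. c / N * (real (N - Suc i) / N)^k) = (\<Sum>i<N. c / N^(k+1) * real (N - Suc i) ^ k)"
          using N by (intro sum.cong) (auto simp: power_divide field_simps)
        also have "\<dots> = c / N^(k+1) * (\<Sum>i<N. real (N - Suc i) ^ k)" by (simp add: sum_distrib_left)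
        also have "(\<Sum>i<N. real (N - Suc i) ^ k) = (\<Sum>j<N. real j ^ k)"
          by (rule sum.nat_diff_reindex)
        finally show ?thesis .
      qed
      moreover have "c / N^(k+1) * (\<Sum>j<N. real j ^ k) \<ge> c / N^(k+1) * (real n^(k+1) / real (k+1))"
        using sum_pow_lb[of n k] c N unfolding N_def by (intro mult_left_mono) auto
      moreover have "c / N^(k+1) * (real n^(k+1) / real (k+1)) = c / real (k+1) * (real n / real (n+1))^(k+1)"
        unfolding N_def by (simp add: power_divide algebra_simps)
      ultimately show ?thesis by linarith
    qed
    have lim: "(\<lambda>n. c / real (k+1) * (real n / real (n+1))^(k+1)) \<longlonglongrightarrow> c / real (k+1) * 1^(k+1)"
      by (intro tendsto_intros) (use LIMSEQ_n_over_Suc_n in simp)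
    have "c / real (k+1) \<le> (\<integral>\<omega>. Y \<omega> \<partial>M)"
      using LIMSEQ_le_const2[OF lim] bound by auto
    then show ?thesis unfolding c_def by (simp add: field_simps)
  qed
  then show "(\<integral>\<omega>. Min ((\<lambda>j. \<bar>x - X j \<omega>\<bar>) ` {1..k}) \<partial>M) \<ge> 1 / (2 * C0 * (real k + 1))"
    unfolding Y_def .
qed

end
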